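(* Let $M\ge1$, $m=2M+1$, $h>0$, $T>0$, and let $D$, $I^{(-1)}$, $e_m$ be as in the context. For every $\mu>0$ the matrix $\mu^{-1}D^{-1}+I^{(-1)}$ is nonsingular, so $z(\mu):=e_m^{\mathsf T}\left(\mu^{-1}D^{-1}+I^{(-1)}\right)^{-1}e_m$ is well defined; setting $z(0):=0$ (equivalently $z(\mu)=\mu e_m^{\mathsf T}D(I_m+\mu I^{(-1)}D)^{-1}e_m$), one has $z(\mu)\in[0,2)$ for all $\mu\ge 0$.
   Context: Sinc time points: $t_j=\dfrac{T e^{jh}}{1+e^{jh}}$, $j=-M,\dots,M$. $D=h\,\mathrm{diag}\big(t_{-M}(T-t_{-M})/T,\dots,t_M(T-t_M)/T\big)\in\mathbb{R}^{m\times m}$. $I^{(-1)}\in\mathbb{R}^{m\times m}$ is the Toeplitz matrix with entries $I^{(-1)}_{l,j}=\frac12+\int_0^{l-j}\frac{\sin(\pi t)}{\pi t}\,dt$, $l,j=1,\dots,m$. $e_m=(1,\dots,1)^{\mathsf T}\in\mathbb{R}^m$. *)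

theory Defs
  imports "HOL-Analysis.Analysis" "Jordan_Normal_Form.Gauss_Jordan_Elimination"
begin

definition sinc_pt :: "real \<Rightarrow> real \<Rightarrow> int \<Rightarrow> real" where
  "sinc_pt h T j = T * exp (real_of_int j * h) / (1 + exp (real_of_int j * h))"

(* D = h diag(t_j (T - t_j)/T), j=-M..M; row/col index i in {0..<2M+1} corresponds to j = i - M *)
definition sinc_D :: "nat \<Rightarrow> real \<Rightarrow> real \<Rightarrow> real mat" where
  "sinc_D M h T = mat (2*M+1) (2*M+1) (\<lambda>(i,k).
     if i = k then h * (sinc_pt h T (int i - int M) * (T - sinc_pt h T (int i - int M)) / T)
     else 0)"

definition sinc_int :: "real \<Rightarrow> real" where
  "sinc_int x = (LBINT t=0..x. sin (pi * t) / (pi * t))"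

definition sinc_Iinv :: "nat \<Rightarrow> real mat" where
  "sinc_Iinv m = mat m m (\<lambda>(l,j). 1/2 + sinc_int (real_of_int (int l - int j)))"

definition ones_vec :: "nat \<Rightarrow> real vec" where
  "ones_vec m = vec m (\<lambda>_. 1)"

definition minv :: "real mat \<Rightarrow> real mat" where
  "minv A = (case mat_inverse A of Some B \<Rightarrow> B | None \<Rightarrow> 0\<^sub>m (dim_row A) (dim_row A))"

definition sinc_z :: "nat \<Rightarrow> real \<Rightarrow> real \<Rightarrow> real \<Rightarrow> real" where
  "sinc_z M h T \<mu> = (if \<mu> = 0 then 0 else
     scalar_prod (ones_vec (2*M+1))
       (minv ((1/\<mu>) \<cdot>\<^sub>m minv (sinc_D M h T) + sinc_Iinv (2*M+1)) *\<^sub>v ones_vec (2*M+1)))"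

end

theory Submission
  imports Defs "Jordan_Normal_Form.Determinant"
begin

lemma sinc_int_odd: "sinc_int (- x) = - sinc_int x"
proof -
  let ?f = "\<lambda>t::real. sin (pi * t) / (pi * t)"
  have ev: "?f (- t) = ?f t" for t by simp
  have refl: "(LBINT t:{a<..<b}. ?f t) = (LBINT t:{-b<..<-a}. ?f t)" for a b :: real
  proof -
    have "(LBINT t:{a<..<b}. ?f t) = (LBINT t:{t. - t \<in> {a<..<b}}. ?f (- t))"
      by (rule set_integral_reflect)
    also have "{t. - t \<in> {a<..<b}} = {-b<..<-a}" by auto
    finally show ?thesis by (simp only: ev)
  qed
  show ?thesis
  proof (cases "x \<ge> 0")
    case True
    have "sinc_int (- x) = - (LBINT t:{-x<..<0}. ?f t)"
      using True unfolding sinc_int_def interval_lebesgue_integral_def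
      by (cases "x = 0") (auto simp: zero_ereal_def set_lebesgue_integral_def)
    also have "\<dots> = - (LBINT t:{0<..<x}. ?f t)" using refl[of 0 x] by simp
    also have "\<dots> = - sinc_int x" using True unfolding sinc_int_def interval_lebesgue_integral_def
      by (simp add: zero_ereal_def)
    finally show ?thesis .
  next
    case False
    have "sinc_int x = - (LBINT t:{x<..<0}. ?f t)"
      using False unfolding sinc_int_def interval_lebesgue_integral_def by (auto simp: zero_ereal_def)
    also have "\<dots> = - (LBINT t:{0<..<-x}. ?f t)" using refl[of x 0] by simp
    also have "\<dots> = - sinc_int (-x)" using False unfolding sinc_int_def interval_lebesgue_integral_def
      by (simp add: zero_ereal_def)
    finally show ?thesis by simp
  qed
qed

lemma minv_props:
  fixes A :: "real mat"
  assumes A: "A \<in> carrier_mat n n"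
    and ker: "\<And>v. v \<in> carrier_vec n \<Longrightarrow> A *\<^sub>v v = 0\<^sub>v n \<Longrightarrow> v = 0\<^sub>v n"
  shows "minv A \<in> carrier_mat n n" "A * minv A = 1\<^sub>m n" "minv A * A = 1\<^sub>m n" "invertible_mat A"
proof -
  have "Determinant.det A \<noteq> 0" using det_0_iff_vec_prod_zero_field[OF A] ker by blast
  from det_non_zero_imp_unit[OF A this, of "()"]
  have U: "A \<in> Units (ring_mat TYPE(real) n ())" .
  obtain B where B: "mat_inverse A = Some B"
    using mat_inverse(1)[OF A, of "()"] U by (cases "mat_inverse A") auto
  note P = mat_inverse(2)[OF A B]
  have mB: "minv A = B" unfolding minv_def using B by simp
  show "minv A \<in> carrier_mat n n" "A * minv A = 1\<^sub>m n" "minv A * A = 1\<^sub>m n"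
    using P mB by auto
  show "invertible_mat A" unfolding invertible_mat_def inverts_mat_def square_mat.simps
    using P A by auto
qed


definition sk :: "nat \<Rightarrow> nat \<Rightarrow> real" where
  "sk l j = sinc_int (real_of_int (int l - int j))"

lemma skew_sum: "(\<Sum>i<n. \<Sum>j<n. x i * x j * sk i j) = (0::real)"
proof -
  let ?S = "(\<Sum>i<n. \<Sum>j<n. x i * x j * sk i j)"
  have "?S = (\<Sum>j<n. \<Sum>i<n. x i * x j * sk i j)" by (rule sum.swap)
  also have "\<dots> = (\<Sum>j<n. \<Sum>i<n. - (x j * x i * sk j i))"
  proof (intro sum.cong refl)
    fix i j
    have "real_of_int (int i - int j) = - real_of_int (int j - int i)" by simp
    hence "sk i j = - sk j i" unfolding sk_def using sinc_int_odd by metis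
    thus "x i * x j * sk i j = - (x j * x i * sk j i)" by simp
  qed
  also have "\<dots> = - ?S" by (simp add: sum_negf)
  finally show ?thesis by simp
qed

lemma quad_form:
  fixes x :: "real vec" and c :: real and d :: "nat \<Rightarrow> real"
  assumes x: "x \<in> carrier_vec n"
  defines "A \<equiv> c \<cdot>\<^sub>m mat n n (\<lambda>(i,k). if i = k then 1 / d i else 0) + sinc_Iinv n"
  shows "x \<bullet> (A *\<^sub>v x) = (\<Sum>i<n. c * (x$i)^2 / d i) + (\<Sum>i<n. x$i)^2 / 2"
proof -
  have Aij: "A $$ (i,j) = (if i = j then c / d i else 0) + 1/2 + sk i j" if "i < n" "j < n" for i j
    using that unfolding A_def sinc_Iinv_def sk_def by auto
  have dA: "dim_row A = n" "dim_col A = n" unfolding A_def sinc_Iinv_def by auto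
  have "x \<bullet> (A *\<^sub>v x) = (\<Sum>i<n. x$i * (\<Sum>j<n. A $$ (i,j) * x$j))"
  proof -
    have "(A *\<^sub>v x) $ i = (\<Sum>j<n. A $$ (i,j) * x$j)" if "i < n" for i
      using that x dA by (auto simp: scalar_prod_def lessThan_atLeast0 intro!: sum.cong)
    thus ?thesis using x dA by (auto simp: scalar_prod_def lessThan_atLeast0 intro!: sum.cong)
  qed
  also have "\<dots> = (\<Sum>i<n. \<Sum>j<n. (if i = j then c * (x$i)^2 / d i else 0)
        + (1/2) * (x$i * x$j) + x$i * x$j * sk i j)"
    by (intro sum.cong refl) (auto simp: Aij sum_distrib_left algebra_simps power2_eq_square intro!: sum.cong)
  also have "\<dots> = (\<Sum>i<n. c * (x$i)^2 / d i) + (1/2) * (\<Sum>i<n. \<Sum>j<n. x$i * x$j)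
        + (\<Sum>i<n. \<Sum>j<n. x$i * x$j * sk i j)"
    by (simp add: sum.distrib sum_distrib_left)
  also have "(\<Sum>i<n. \<Sum>j<n. x$i * x$j) = (\<Sum>i<n. x$i)^2"
    by (simp add: power2_eq_square sum_product)
  also have "(\<Sum>i<n. \<Sum>j<n. x$i * x$j * sk i j) = 0" by (rule skew_sum)
  finally show ?thesis by simp
qed


lemma sinc_pt_bounds: assumes "T > 0" shows "0 < sinc_pt h T j" "sinc_pt h T j < T"
proof -
  let ?e = "exp (real_of_int j * h)"
  have e: "?e > 0" by simp
  have e1: "1 + ?e > 0" using e by linarith
  show "0 < sinc_pt h T j" unfolding sinc_pt_def using e e1 assms by simp
  have "T * ?e < T * (1 + ?e)" using assms by simp
  thus "sinc_pt h T j < T" unfolding sinc_pt_def using e1 by (simp add: divide_less_eq)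
qed

definition dd :: "nat \<Rightarrow> real \<Rightarrow> real \<Rightarrow> nat \<Rightarrow> real" where
  "dd M h T i = h * (sinc_pt h T (int i - int M) * (T - sinc_pt h T (int i - int M)) / T)"

lemma dd_pos: assumes "h > 0" "T > 0" shows "dd M h T i > 0"
  unfolding dd_def using sinc_pt_bounds[OF assms(2)] assms by simp

lemma minv_D:
  assumes "h > 0" "T > 0"
  shows "minv (sinc_D M h T) = mat (2*M+1) (2*M+1) (\<lambda>(i,k). if i = k then 1 / dd M h T i else 0)"
proof -
  let ?n = "2*M+1"
  let ?D = "sinc_D M h T"
  let ?E = "mat ?n ?n (\<lambda>(i,k). if i = k then 1 / dd M h T i else 0)"
  have Dc: "?D \<in> carrier_mat ?n ?n" unfolding sinc_D_def by auto
  have Ec: "?E \<in> carrier_mat ?n ?n" by auto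
  have Dij: "?D $$ (i,k) = (if i = k then dd M h T i else 0)" if "i < ?n" "k < ?n" for i k
    using that unfolding sinc_D_def dd_def by auto
  have ker: "v = 0\<^sub>v ?n" if v: "v \<in> carrier_vec ?n" and "?D *\<^sub>v v = 0\<^sub>v ?n" for v
  proof (intro eq_vecI)
    fix i assume i: "i < dim_vec (0\<^sub>v ?n :: real vec)"
    hence i': "i < ?n" by simp
    have "(?D *\<^sub>v v) $ i = (\<Sum>k\<in>{0..<?n}. ?D $$ (i,k) * v $ k)"
      using i' v Dc by (simp add: scalar_prod_def)
    also have "\<dots> = (\<Sum>k\<in>{0..<?n}. if i = k then dd M h T i * v $ k else 0)"
      by (intro sum.cong refl) (use i' Dij in auto)
    also have "\<dots> = dd M h T i * v $ i" using i' by (simp add: sum.delta)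
    finally have "(?D *\<^sub>v v) $ i = dd M h T i * v $ i" .
    moreover have "(?D *\<^sub>v v) $ i = 0" using that(2) i' by simp
    ultimately show "v $ i = 0\<^sub>v ?n $ i" using dd_pos[OF assms, of M i] i' by simp
  qed (use v in auto)
  note P = minv_props[OF Dc ker]
  have ED: "?E * ?D = 1\<^sub>m ?n"
  proof (rule eq_matI)
    fix i j assume "i < dim_row (1\<^sub>m ?n :: real mat)" "j < dim_col (1\<^sub>m ?n :: real mat)"
    hence ij: "i < ?n" "j < ?n" by auto
    have "(?E * ?D) $$ (i,j) = (\<Sum>k\<in>{0..<?n}. (if i = k then 1 / dd M h T i else 0) * ?D $$ (k,j))"
      using ij Dc by (simp add: scalar_prod_def)
    also have "\<dots> = (\<Sum>k\<in>{0..<?n}. if i = k then 1 / dd M h T i * ?D $$ (i,j) else 0)"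
      by (intro sum.cong refl) auto
    also have "\<dots> = 1 / dd M h T i * ?D $$ (i,j)"
      using ij by (simp add: sum.delta)
    also have "\<dots> = 1\<^sub>m ?n $$ (i,j)" using ij Dij[OF ij] dd_pos[OF assms, of M i] by auto
    finally show "(?E * ?D) $$ (i,j) = 1\<^sub>m ?n $$ (i,j)" .
  qed (use Dc in auto)
  have "minv ?D = (?E * ?D) * minv ?D" using ED P(1) by simp
  also have "\<dots> = ?E * (?D * minv ?D)" by (rule assoc_mult_mat[OF Ec Dc P(1)])
  also have "\<dots> = ?E" using P(2) Ec by simp
  finally show ?thesis .
qed


lemma main_pos:
  fixes M :: nat and h T \<mu> :: real
  assumes "h > 0" and "T > 0" and "\<mu> > 0"
  shows "invertible_mat ((1/\<mu>) \<cdot>\<^sub>m minv (sinc_D M h T) + sinc_Iinv (2*M+1))"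
        "0 \<le> sinc_z M h T \<mu> \<and> sinc_z M h T \<mu> < 2"
proof -
  let ?n = "2*M+1"
  let ?c = "1/\<mu>"
  let ?d = "dd M h T"
  let ?A = "?c \<cdot>\<^sub>m minv (sinc_D M h T) + sinc_Iinv ?n"
  have Aeq: "?A = ?c \<cdot>\<^sub>m mat ?n ?n (\<lambda>(i,k). if i = k then 1 / ?d i else 0) + sinc_Iinv ?n"
    using minv_D[OF assms(1,2)] by simp
  have c: "?c > 0" using assms by simp
  have Ac: "?A \<in> carrier_mat ?n ?n" unfolding Aeq sinc_Iinv_def by auto
  have qf: "x \<bullet> (?A *\<^sub>v x) = (\<Sum>i<?n. ?c * (x$i)^2 / ?d i) + (\<Sum>i<?n. x$i)^2 / 2"
    if "x \<in> carrier_vec ?n" for x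
    unfolding Aeq by (rule quad_form[OF that])
  have tnn: "?c * (x$i)^2 / ?d i \<ge> 0" for x :: "real vec" and i
    using c dd_pos[OF assms(1,2), of M i] by simp
  have pos: "(\<Sum>i<?n. ?c * (x$i)^2 / ?d i) > 0" if x: "x \<in> carrier_vec ?n" "x \<noteq> 0\<^sub>v ?n" for x
  proof (rule ccontr)
    assume "\<not> ?thesis"
    moreover have "(\<Sum>i<?n. ?c * (x$i)^2 / ?d i) \<ge> 0" by (intro sum_nonneg tnn)
    ultimately have "(\<Sum>i<?n. ?c * (x$i)^2 / ?d i) = 0" by linarith
    hence "\<forall>i\<in>{..<?n}. ?c * (x$i)^2 / ?d i = 0"
      using sum_nonneg_eq_0_iff[of "{..<?n}" "\<lambda>i. ?c * (x$i)^2 / ?d i", OF finite_lessThan tnn]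
      by blast
    hence "x $ i = 0" if "i < ?n" for i
      using that c dd_pos[OF assms(1,2), of M i] by auto
    hence "x = 0\<^sub>v ?n" using x(1) by (intro eq_vecI) auto
    thus False using x(2) by simp
  qed
  have ker: "v = 0\<^sub>v ?n" if v: "v \<in> carrier_vec ?n" and Av: "?A *\<^sub>v v = 0\<^sub>v ?n" for v
  proof (rule ccontr)
    assume nz: "v \<noteq> 0\<^sub>v ?n"
    have "v \<bullet> (?A *\<^sub>v v) = 0" using Av v by simp
    moreover have "v \<bullet> (?A *\<^sub>v v) > 0"
      using qf[OF v] pos[OF v nz] zero_le_power2[of "\<Sum>i<?n. v$i"]
      by (smt (verit) divide_nonneg_pos)
    ultimately show False by simp
  qed
  note P = minv_props[OF Ac ker]
  show "invertible_mat ?A" by (rule P(4))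
  let ?e = "ones_vec ?n"
  have ec: "?e \<in> carrier_vec ?n" unfolding ones_vec_def by simp
  define y where "y = minv ?A *\<^sub>v ?e"
  have yc: "y \<in> carrier_vec ?n" unfolding y_def using P(1) ec by simp
  have Ay: "?A *\<^sub>v y = ?e" unfolding y_def
    using assoc_mult_mat_vec[OF Ac P(1) ec, symmetric] P(2) ec by simp
  define z where "z = ?e \<bullet> y"
  have zdef: "sinc_z M h T \<mu> = z" unfolding sinc_z_def z_def y_def using assms by simp
  have zsum: "z = (\<Sum>i<?n. y$i)" unfolding z_def scalar_prod_def ones_vec_def using yc
    by (simp add: lessThan_atLeast0)
  have "z = y \<bullet> ?e" unfolding z_def by (rule comm_scalar_prod[OF ec yc])
  also have "\<dots> = y \<bullet> (?A *\<^sub>v y)" using Ay by simp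
  finally have zq: "z = (\<Sum>i<?n. ?c * (y$i)^2 / ?d i) + z^2/2" using qf[OF yc] zsum by simp
  have ynz: "y \<noteq> 0\<^sub>v ?n"
  proof
    assume "y = 0\<^sub>v ?n"
    moreover have "dim_row ?A = ?n" using Ac by blast
    ultimately have "?A *\<^sub>v y = 0\<^sub>v ?n" by (intro eq_vecI) (auto simp: scalar_prod_def)
    hence "?e = 0\<^sub>v ?n" using Ay by simp
    hence "?e $ 0 = 0" by simp
    thus False unfolding ones_vec_def by simp
  qed
  define a where "a = (\<Sum>i<?n. ?c * (y$i)^2 / ?d i)"
  have a: "a > 0" unfolding a_def by (rule pos[OF yc ynz])
  have za: "z = a + z^2/2" using zq a_def by simp
  have "z^2/2 \<ge> 0" by simp
  hence z0: "z \<ge> 0" using za a by linarith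
  have z2: "z < 2"
  proof (rule ccontr)
    assume "\<not> z < 2"
    hence "z * z \<ge> 2 * z" by (intro mult_right_mono) auto
    hence "z^2/2 \<ge> z" by (simp add: power2_eq_square)
    thus False using za a by linarith
  qed
  show "0 \<le> sinc_z M h T \<mu> \<and> sinc_z M h T \<mu> < 2" using zdef z0 z2 by simp
qed

theorem lemma3p2:
  fixes M :: nat and h T :: real
  assumes "M \<ge> 1" and "h > 0" and "T > 0"
  shows "(\<forall>\<mu>>0. invertible_mat ((1/\<mu>) \<cdot>\<^sub>m minv (sinc_D M h T) + sinc_Iinv (2*M+1)))
         \<and> (\<forall>\<mu>\<ge>0. 0 \<le> sinc_z M h T \<mu> \<and> sinc_z M h T \<mu> < 2)"
proof (rule conjI; intro allI impI)
  fix \<mu> :: real assume "\<mu> > 0"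
  thus "invertible_mat ((1/\<mu>) \<cdot>\<^sub>m minv (sinc_D M h T) + sinc_Iinv (2*M+1))"
    using main_pos[OF assms(2,3)] by blast
next
  fix \<mu> :: real assume m: "\<mu> \<ge> 0"
  show "0 \<le> sinc_z M h T \<mu> \<and> sinc_z M h T \<mu> < 2"
  proof (cases "\<mu> = 0")
    case True thus ?thesis unfolding sinc_z_def by simp
  next
    case False thus ?thesis using main_pos[OF assms(2,3)] m by simp
  qed
qed

end
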